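(* Let $\beta>0$, $n\in\mathbb{N}$ (a nonnegative integer), $f\in H(\mathbb{D})$, and for $w\in\mathbb{D}$ let $F_w(z)=\dfrac{f(z)}{(1-\overline{w}z)^{\beta+n}}$. Then for every $w\in\mathbb{D}$, $$(1-|w|^2)^{n+1}\left(F_w^{(n+1)}(w)-\frac{f^{(n+1)}(w)}{(1-|w|^2)^{\beta+n}}\right)+\sum_{i=0}^{n}(-1)^{i+1}\binom{n+1}{i+1}\Gamma_\beta^{n-i,n}\,\overline{w}^{\,i+1}F_w^{(n-i)}(w)(1-|w|^2)^{n-i}=0,$$ where for integers $0\leq a\leq b$, $\Gamma_\beta^{a,b}=\prod_{j=a}^{b}(\beta+j)$.
   Context: $\mathbb{D}$ is the open unit disc and $H(\mathbb{D})$ the space of analytic functions on $\mathbb{D}$; $F_w^{(m)}$ denotes the $m$-th derivative of $F_w$ in $z$. *)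

theory Defs
  imports "HOL-Complex_Analysis.Complex_Analysis"
begin

definition Gamma_beta :: "real \<Rightarrow> nat \<Rightarrow> nat \<Rightarrow> real" where
  "Gamma_beta \<beta> a b = (\<Prod>j\<in>{a..b}. \<beta> + real j)"

text \<open>F_w(z) = f(z) / (1 - conj(w) z)^(beta+n), principal branch (Re(1 - conj w z) > 0 on the disc).\<close>
definition F_w :: "(complex \<Rightarrow> complex) \<Rightarrow> real \<Rightarrow> nat \<Rightarrow> complex \<Rightarrow> complex \<Rightarrow> complex" where
  "F_w f \<beta> n w z = f z / (1 - cnj w * z) powr complex_of_real (\<beta> + real n)"

end

theory Submission
  imports Defs
begin

lemma re_pos:
  assumes "cmod w < 1" "z \<in> ball 0 1"
  shows "Re (1 - cnj w * z) > 0"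
proof -
  have "Re (cnj w * z) \<le> cmod (cnj w * z)" by (rule complex_Re_le_cmod)
  also have "\<dots> = cmod w * cmod z" by (simp add: norm_mult)
  also have "\<dots> \<le> cmod z" using assms by (intro mult_left_le_one_le) auto
  also have "\<dots> < 1" using assms by simp
  finally show ?thesis by simp
qed

lemma not_nonpos:
  assumes "cmod w < 1" "z \<in> ball 0 1"
  shows "1 - cnj w * z \<notin> \<real>\<^sub>\<le>\<^sub>0"
  using re_pos[OF assms] by (auto simp: complex_nonpos_Reals_iff)

lemma hderiv1:
  assumes "cmod w < 1" "z \<in> ball 0 1"
  shows "((\<lambda>z. (1 - cnj w * z) powr t) has_field_derivative
           (t * (1 - cnj w * z) powr (t - 1) * (- cnj w))) (at z)"
proof -
  have d: "((\<lambda>z. 1 - cnj w * z) has_field_derivative (- cnj w)) (at z)"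
    by (auto intro!: derivative_eq_intros)
  show ?thesis
    using DERIV_chain2[OF has_field_derivative_powr[OF not_nonpos[OF assms]] d] by simp
qed

lemma hder:
  assumes "cmod w < 1"
  shows "\<forall>z\<in>ball 0 1. (deriv ^^ k) (\<lambda>z. (1 - cnj w * z) powr s) z
     = (- cnj w) ^ k * (\<Prod>j<k. s - of_nat j) * (1 - cnj w * z) powr (s - of_nat k)"
proof (induction k)
  case 0
  then show ?case by simp
next
  case (Suc k)
  show ?case
  proof
    fix z :: complex assume z: "z \<in> ball 0 1"
    have ev: "eventually (\<lambda>x. (deriv ^^ k) (\<lambda>z. (1 - cnj w * z) powr s) x =
       (- cnj w) ^ k * (\<Prod>j<k. s - of_nat j) * (1 - cnj w * x) powr (s - of_nat k)) (nhds z)"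
      using eventually_nhds_in_open[OF open_ball z] by (rule eventually_mono) (use Suc.IH in auto)
    have "(deriv ^^ Suc k) (\<lambda>z. (1 - cnj w * z) powr s) z
        = deriv (\<lambda>z. (- cnj w) ^ k * (\<Prod>j<k. s - of_nat j) * (1 - cnj w * z) powr (s - of_nat k)) z"
      using deriv_cong_ev[OF ev refl] by simp
    also have "\<dots> = (- cnj w) ^ k * (\<Prod>j<k. s - of_nat j) * ((s - of_nat k) * (1 - cnj w * z) powr (s - of_nat k - 1) * (- cnj w))"
      by (intro DERIV_imp_deriv DERIV_cmult hderiv1 assms z)
    also have "\<dots> = (- cnj w) ^ Suc k * (\<Prod>j<Suc k. s - of_nat j) * (1 - cnj w * z) powr (s - of_nat (Suc k))"
      by (simp add: algebra_simps diff_diff_eq)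
    finally show "(deriv ^^ Suc k) (\<lambda>z. (1 - cnj w * z) powr s) z
     = (- cnj w) ^ Suc k * (\<Prod>j<Suc k. s - of_nat j) * (1 - cnj w * z) powr (s - of_nat (Suc k))" .
  qed
qed

lemma gamma_eq:
  "i \<le> n \<Longrightarrow> Gamma_beta \<beta> (n - i) n = (\<Prod>j<Suc i. \<beta> + real n - real j)"
proof (induction i)
  case 0
  then show ?case by (simp add: Gamma_beta_def)
next
  case (Suc i)
  have "{n - Suc i..n} = insert (n - Suc i) {n - i..n}" using Suc.prems by auto
  then have "Gamma_beta \<beta> (n - Suc i) n = (\<beta> + real (n - Suc i)) * Gamma_beta \<beta> (n - i) n"
    unfolding Gamma_beta_def using Suc.prems by (simp add: prod.insert)
  also have "\<dots> = (\<beta> + real n - real (Suc i)) * (\<Prod>j<Suc i. \<beta> + real n - real j)"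
    using Suc by (simp add: of_nat_diff)
  finally show ?case by (simp add: mult.commute)
qed


theorem lemma2p7:
  fixes f :: "complex \<Rightarrow> complex" and \<beta> :: real and n :: nat and w :: complex
  assumes "\<beta> > 0"
    and "f holomorphic_on ball 0 1"
    and "w \<in> ball 0 1"
  shows "complex_of_real ((1 - (cmod w)\<^sup>2) ^ (n + 1)) *
           ((deriv ^^ (n + 1)) (F_w f \<beta> n w) w
             - (deriv ^^ (n + 1)) f w / complex_of_real ((1 - (cmod w)\<^sup>2) powr (\<beta> + real n)))
         + (\<Sum>i = 0..n. (-1) ^ (i + 1) * of_nat ((n + 1) choose (i + 1))
              * complex_of_real (Gamma_beta \<beta> (n - i) n) * (cnj w) ^ (i + 1)
              * (deriv ^^ (n - i)) (F_w f \<beta> n w) w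
              * complex_of_real ((1 - (cmod w)\<^sup>2) ^ (n - i))) = 0"
proof -
  define s where "s = complex_of_real (\<beta> + real n)"
  define h where "h = (\<lambda>z. (1 - cnj w * z) powr s)"
  define F where "F = F_w f \<beta> n w"
  define a where "a = 1 - (cmod w)\<^sup>2"
  define P where "P = a powr (\<beta> + real n)"
  define G where "G = (\<lambda>i. (deriv ^^ i) F w)"
  have w1: "cmod w < 1" using assms(3) by simp
  have apos: "a > 0" unfolding a_def using w1
    by (simp add: abs_square_less_1)
  have Ppos: "P > 0" unfolding P_def using apos by simp
  have ww: "1 - cnj w * w = complex_of_real a"
  proof -
    have "cnj w * w = complex_of_real ((cmod w)\<^sup>2)"
      by (metis complex_norm_square mult.commute of_real_power)
    then show ?thesis unfolding a_def by simp
  qed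
  have hol_h: "h holomorphic_on ball 0 1"
    unfolding h_def by (intro holomorphic_intros) (use not_nonpos[OF w1] in auto)
  have hnz: "h z \<noteq> 0" if "z \<in> ball 0 1" for z
    unfolding h_def using not_nonpos[OF w1 that] by auto
  have hol_F: "F holomorphic_on ball 0 1"
  proof -
    have "F = (\<lambda>z. f z / h z)" unfolding F_def F_w_def h_def s_def by simp
    then show ?thesis using holomorphic_on_divide[OF assms(2) hol_h] hnz by simp
  qed
  have ev: "eventually (\<lambda>z. f z = h z * F z) (nhds w)"
    using eventually_nhds_in_open[OF open_ball assms(3)]
    by (rule eventually_mono) (use hnz in \<open>auto simp: F_def F_w_def s_def h_def\<close>)
  have "(deriv ^^ (n + 1)) f w = (deriv ^^ (n + 1)) (\<lambda>z. h z * F z) w"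
    by (rule higher_deriv_cong_ev[OF ev refl])
  also have "\<dots> = (\<Sum>k = 0..Suc n. of_nat (Suc n choose k) * (deriv ^^ k) h w * G (Suc n - k))"
    unfolding G_def Suc_eq_plus1 by (rule higher_deriv_mult[OF hol_h hol_F open_ball assms(3)])
  also have "\<dots> = h w * G (Suc n) + (\<Sum>i = 0..n. of_nat (Suc n choose Suc i) * (deriv ^^ Suc i) h w * G (n - i))"
    by (subst sum.atLeast0_atMost_Suc_shift) simp
  finally have D: "(deriv ^^ (n + 1)) f w = h w * G (Suc n) + (\<Sum>i = 0..n. of_nat (Suc n choose Suc i) * (deriv ^^ Suc i) h w * G (n - i))" .
  have hw: "h w = complex_of_real P"
    unfolding h_def ww s_def P_def using apos powr_of_real[of a "\<beta> + real n"] by simp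
  have hk: "(deriv ^^ Suc i) h w = (- cnj w) ^ Suc i * complex_of_real (Gamma_beta \<beta> (n - i) n) * complex_of_real (P / a ^ Suc i)"
    if "i \<le> n" for i
  proof -
    have "(deriv ^^ Suc i) h w = (- cnj w) ^ Suc i * (\<Prod>j<Suc i. s - of_nat j) * (1 - cnj w * w) powr (s - of_nat (Suc i))"
      using hder[OF w1, of "Suc i" s] assms(3) unfolding h_def by blast
    also have "(\<Prod>j<Suc i. s - of_nat j) = complex_of_real (Gamma_beta \<beta> (n - i) n)"
      unfolding gamma_eq[OF that] s_def by simp
    also have "(1 - cnj w * w) powr (s - of_nat (Suc i)) = complex_of_real (a powr (\<beta> + real n - real (Suc i)))"
      unfolding ww s_def using apos powr_of_real[of a "\<beta> + real n - real (Suc i)"] by simp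
    also have "a powr (\<beta> + real n - real (Suc i)) = P / a ^ Suc i"
      unfolding P_def using apos powr_realpow[of a "Suc i"] by (simp add: powr_diff del: of_nat_Suc)
    finally show ?thesis .
  qed
  have "complex_of_real (a ^ (n + 1)) * (G (n + 1) - (deriv ^^ (n + 1)) f w / complex_of_real P)
     = - (\<Sum>i = 0..n. of_nat (Suc n choose Suc i) * (- cnj w) ^ Suc i * complex_of_real (Gamma_beta \<beta> (n - i) n) * G (n - i) * complex_of_real (a ^ (n - i)))"
  proof -
    have "(deriv ^^ (n + 1)) f w / complex_of_real P = G (Suc n) + (\<Sum>i = 0..n. of_nat (Suc n choose Suc i) * (- cnj w) ^ Suc i * complex_of_real (Gamma_beta \<beta> (n - i) n) * G (n - i) / complex_of_real (a ^ Suc i))"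
      unfolding D hw add_divide_distrib sum_divide_distrib
    proof (intro arg_cong2[where f="(+)"] sum.cong refl)
      show "complex_of_real P * G (Suc n) / complex_of_real P = G (Suc n)" using Ppos by simp
    next
      fix i assume "i \<in> {0..n}"
      then have "i \<le> n" by simp
      show "of_nat (Suc n choose Suc i) * (deriv ^^ Suc i) h w * G (n - i) / complex_of_real P =
         of_nat (Suc n choose Suc i) * (- cnj w) ^ Suc i * complex_of_real (Gamma_beta \<beta> (n - i) n) * G (n - i) / complex_of_real (a ^ Suc i)"
        unfolding hk[OF \<open>i \<le> n\<close>] using Ppos apos by (simp add: of_real_divide)
    qed
    moreover have "complex_of_real (a ^ (n + 1)) * (\<Sum>i = 0..n. of_nat (Suc n choose Suc i) * (- cnj w) ^ Suc i * complex_of_real (Gamma_beta \<beta> (n - i) n) * G (n - i) / complex_of_real (a ^ Suc i))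
       = (\<Sum>i = 0..n. of_nat (Suc n choose Suc i) * (- cnj w) ^ Suc i * complex_of_real (Gamma_beta \<beta> (n - i) n) * G (n - i) * complex_of_real (a ^ (n - i)))"
      unfolding sum_distrib_left
    proof (rule sum.cong[OF refl])
      fix i assume "i \<in> {0..n}"
      then have "a ^ (n + 1) = a ^ (n - i) * a ^ Suc i" by (simp flip: power_add)
      then show "complex_of_real (a ^ (n + 1)) * (of_nat (Suc n choose Suc i) * (- cnj w) ^ Suc i * complex_of_real (Gamma_beta \<beta> (n - i) n) * G (n - i) / complex_of_real (a ^ Suc i))
        = of_nat (Suc n choose Suc i) * (- cnj w) ^ Suc i * complex_of_real (Gamma_beta \<beta> (n - i) n) * G (n - i) * complex_of_real (a ^ (n - i))"
        using apos by (simp add: field_simps)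
    qed
    ultimately show ?thesis by (simp add: algebra_simps)
  qed
  moreover have "(\<Sum>i = 0..n. of_nat (Suc n choose Suc i) * (- cnj w) ^ Suc i * complex_of_real (Gamma_beta \<beta> (n - i) n) * G (n - i) * complex_of_real (a ^ (n - i)))
     = (\<Sum>i = 0..n. (-1) ^ (i + 1) * of_nat ((n + 1) choose (i + 1))
              * complex_of_real (Gamma_beta \<beta> (n - i) n) * (cnj w) ^ (i + 1)
              * G (n - i) * complex_of_real (a ^ (n - i)))"
    by (intro sum.cong refl) (simp add: power_minus[of "cnj w"] mult_ac)
  ultimately show ?thesis
    unfolding F_def[symmetric] G_def[symmetric] a_def[symmetric] P_def[symmetric]
    by (simp add: G_def)
qed

end
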